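(* Let $A\subseteq\mathbb{N}$ be a sum-dominant set with $|A|=6$. If there exist distinct $m_1, m_2, m_3\in A$ such that $m_2-m_1 = m_3-m_2$, then $A-A$ contains at most $7$ distinct positive elements.
   Context: For a finite set $A\subseteq\mathbb{N}$, the sum set is $A+A=\{a_i+a_j : a_i,a_j\in A\}$ and the difference set is $A-A=\{a_i-a_j : a_i,a_j\in A\}$. The set $A$ is called sum-dominant if $|A+A|>|A-A|$. *)

theory Defs
  imports Main
begin

definition sumset :: "nat set \<Rightarrow> nat set" where
  "sumset A = {a + b | a b. a \<in> A \<and> b \<in> A}"

definition diffset :: "nat set \<Rightarrow> int set" where
  "diffset A = {int a - int b | a b. a \<in> A \<and> b \<in> A}"

definition sum_dominant :: "nat set \<Rightarrow> bool" where
  "sum_dominant A \<longleftrightarrow> finite A \<and> card (sumset A) > card (diffset A)"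

end

theory Submission
  imports Defs
begin


lemma card_fib:
  assumes fin: "finite X"
  shows "card X = (\<Sum>y\<in>f`X. card {x. x \<in> X \<and> f x = y})"
proof -
  have "card X = (\<Sum>x\<in>X. 1::nat)" by simp
  also have "\<dots> = (\<Sum>y\<in>f`X. \<Sum>x\<in>{x. x \<in> X \<and> f x = y}. 1::nat)" by (rule sum.image_gen[OF fin])
  also have "\<dots> = (\<Sum>y\<in>f`X. card {x. x \<in> X \<and> f x = y})" by simp
  finally show ?thesis .
qed

lemma coll_card:
  assumes "finite X"
  shows "card {(u,v). u\<in>X \<and> v\<in>X \<and> u\<noteq>v \<and> f u = f v}
     = (\<Sum>y\<in>f`X. card {x. x \<in> X \<and> f x = y} * (card {x. x \<in> X \<and> f x = y} - 1))"
proof -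
  have e: "{(u,v). u\<in>X \<and> v\<in>X \<and> u\<noteq>v \<and> f u = f v} = (SIGMA u:X. {x. x \<in> X \<and> f x = f u} - {u})"
    by auto
  have c: "card ({x. x \<in> X \<and> f x = f u} - {u}) = card {x. x \<in> X \<and> f x = f u} - 1" if "u \<in> X" for u
    using that by (simp add: card_Diff_singleton)
  have "card {(u,v). u\<in>X \<and> v\<in>X \<and> u\<noteq>v \<and> f u = f v} = (\<Sum>u\<in>X. card {x. x \<in> X \<and> f x = f u} - 1)"
    unfolding e using assms by (simp add: c)
  also have "\<dots> = (\<Sum>y\<in>f`X. \<Sum>u\<in>{x. x \<in> X \<and> f x = y}. card {x. x \<in> X \<and> f x = f u} - 1)"
    using assms by (rule sum.image_gen)
  also have "\<dots> = (\<Sum>y\<in>f`X. \<Sum>u\<in>{x. x \<in> X \<and> f x = y}. card {x. x \<in> X \<and> f x = y} - 1)"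
    by (intro sum.cong refl) auto
  also have "\<dots> = (\<Sum>y\<in>f`X. card {x. x \<in> X \<and> f x = y} * (card {x. x \<in> X \<and> f x = y} - 1))"
    by simp
  finally show ?thesis .
qed

lemma loss_sum:
  assumes "finite X"
  shows "card X = card (f`X) + (\<Sum>y\<in>f`X. card {x. x \<in> X \<and> f x = y} - 1)"
proof -
  have pos: "card {x. x \<in> X \<and> f x = y} \<ge> 1" if yin: "y \<in> f`X" for y
  proof -
    obtain x where "x \<in> X" "f x = y" using yin by blast
    moreover have "finite {x. x \<in> X \<and> f x = y}" using assms by simp
    ultimately show ?thesis by (metis (mono_tags, lifting) One_nat_def Suc_leI card_gt_0_iff empty_iff mem_Collect_eq)
  qed
  have "card X = (\<Sum>y\<in>f`X. 1 + (card {x. x \<in> X \<and> f x = y} - 1))"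
    using card_fib[OF assms, of f] pos by (metis (no_types, lifting) le_add_diff_inverse sum.cong)
  also have "\<dots> = card (f`X) + (\<Sum>y\<in>f`X. card {x. x \<in> X \<and> f x = y} - 1)"
    by (simp add: sum_Suc)
  finally show ?thesis .
qed



lemma basics:
  fixes A :: "nat set"
  assumes fA: "finite A" and cA: "card A = 6"
  defines "PS \<equiv> {(x,y). x\<in>A \<and> y\<in>A \<and> x \<le> y}"
      and "PD \<equiv> {(x,y). x\<in>A \<and> y\<in>A \<and> x < y}"
  shows "card PD = 15" "card PS = 21" "finite PD" "finite PS"
    "sumset A = (\<lambda>p. fst p + snd p) ` PS"
    "{d \<in> diffset A. d > 0} = (\<lambda>p. int (snd p) - int (fst p)) ` PD"
    "card (diffset A) = 2 * card {d \<in> diffset A. d > 0} + 1"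
proof -
  have sPD: "PD \<subseteq> A \<times> A" and sPS: "PS \<subseteq> A \<times> A" unfolding PD_def PS_def by auto
  show fPD: "finite PD" using sPD fA by (meson finite_SigmaI finite_subset)
  show fPS: "finite PS" using sPS fA by (meson finite_SigmaI finite_subset)
  define D where "D = (\<lambda>x. (x,x)) ` A"
  have fD: "finite D" unfolding D_def using fA by simp
  have cD: "card D = 6" unfolding D_def using cA by (simp add: card_image inj_on_def)
  have cS: "card (prod.swap ` PD) = card PD" by (simp add: card_image)
  have u: "A \<times> A = PD \<union> prod.swap ` PD \<union> D" unfolding PD_def D_def by (auto simp: image_iff) 
  have d1: "(PD \<union> prod.swap ` PD) \<inter> D = {}" unfolding PD_def D_def by auto
  have d2: "PD \<inter> prod.swap ` PD = {}" unfolding PD_def by auto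
  have d3: "PD \<inter> D = {}" unfolding PD_def D_def by auto
  have "card (A \<times> A) = 36" using cA by (simp add: card_cartesian_product)
  moreover have "card (PD \<union> prod.swap ` PD \<union> D) = card (PD \<union> prod.swap ` PD) + card D"
    by (rule card_Un_disjoint) (use fPD fD d1 in auto)
  moreover have "card (PD \<union> prod.swap ` PD) = card PD + card (prod.swap ` PD)"
    by (rule card_Un_disjoint) (use fPD d2 in auto)
  ultimately show c15: "card PD = 15" using u cS cD by simp
  have "PS = PD \<union> D" unfolding PS_def PD_def D_def by auto
  moreover have "card (PD \<union> D) = card PD + card D"
    by (rule card_Un_disjoint) (use fPD fD d3 in auto)
  ultimately show "card PS = 21" using c15 cD by simp
  show "sumset A = (\<lambda>p. fst p + snd p) ` PS"
  proof
    show "sumset A \<subseteq> (\<lambda>p. fst p + snd p) ` PS"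
    proof
      fix s assume "s \<in> sumset A"
      then obtain a b where ab: "a \<in> A" "b \<in> A" "s = a + b" unfolding sumset_def by blast
      show "s \<in> (\<lambda>p. fst p + snd p) ` PS"
      proof (cases "a \<le> b")
        case True
        then have "(a,b) \<in> PS" using ab unfolding PS_def by simp
        then show ?thesis using ab by force
      next
        case False
        then have "(b,a) \<in> PS" using ab unfolding PS_def by simp
        then show ?thesis using ab by force
      qed
    qed
    show "(\<lambda>p. fst p + snd p) ` PS \<subseteq> sumset A"
    proof
      fix s assume "s \<in> (\<lambda>p. fst p + snd p) ` PS"
      then obtain a b where "(a,b) \<in> PS" "s = a + b" by auto
      then show "s \<in> sumset A" unfolding PS_def sumset_def by blast
    qed
  qed
  show dp: "{d \<in> diffset A. d > 0} = (\<lambda>p. int (snd p) - int (fst p)) ` PD"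
  proof
    show "{d \<in> diffset A. d > 0} \<subseteq> (\<lambda>p. int (snd p) - int (fst p)) ` PD"
    proof
      fix d assume "d \<in> {d \<in> diffset A. d > 0}"
      then obtain a b where ab: "a \<in> A" "b \<in> A" "d = int a - int b" "d > 0" unfolding diffset_def by blast
      then have "(b,a) \<in> PD" unfolding PD_def by simp
      then show "d \<in> (\<lambda>p. int (snd p) - int (fst p)) ` PD" using ab by force
    qed
    show "(\<lambda>p. int (snd p) - int (fst p)) ` PD \<subseteq> {d \<in> diffset A. d > 0}"
    proof
      fix s assume "s \<in> (\<lambda>p. int (snd p) - int (fst p)) ` PD"
      then obtain a b where "(a,b) \<in> PD" "s = int b - int a" by auto
      then show "s \<in> {d \<in> diffset A. d > 0}" unfolding PD_def diffset_def by auto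
    qed
  qed
  define P where "P = {d \<in> diffset A. d > 0}"
  have fP: "finite P" unfolding P_def dp using fPD by simp
  have "diffset A = P \<union> uminus ` P \<union> {0}"
  proof
    show "diffset A \<subseteq> P \<union> uminus ` P \<union> {0}"
    proof
      fix d assume "d \<in> diffset A"
      then obtain a b where ab: "a \<in> A" "b \<in> A" "d = int a - int b" unfolding diffset_def by blast
      have "int b - int a \<in> diffset A" using ab unfolding diffset_def by blast
      show "d \<in> P \<union> uminus ` P \<union> {0}"
      proof (cases "d > 0")
        case True
        then show ?thesis using \<open>d \<in> diffset A\<close> unfolding P_def by blast
      next
        case False
        show ?thesis
        proof (cases "d = 0")
          case True then show ?thesis by blast
        next
          case F2: False
          have "-d \<in> P" using False F2 ab \<open>int b - int a \<in> diffset A\<close> unfolding P_def by auto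
          then have "d \<in> uminus ` P" by (metis image_eqI minus_minus)
          then show ?thesis by blast
        qed
      qed
    qed
    have "A \<noteq> {}" using cA by auto
    then obtain a0 where "a0 \<in> A" by blast
    then have "0 \<in> diffset A" unfolding diffset_def by force
    moreover have "- d \<in> diffset A" if dd: "d \<in> diffset A" for d
    proof -
      obtain a b where ab: "a \<in> A" "b \<in> A" "d = int a - int b" using dd unfolding diffset_def by blast
      then have "-d = int b - int a" by simp
      then show ?thesis unfolding diffset_def using ab by blast
    qed
    moreover have "P \<subseteq> diffset A" unfolding P_def by blast
    ultimately show "P \<union> uminus ` P \<union> {0} \<subseteq> diffset A" by blast
  qed
  moreover have "card (P \<union> uminus ` P \<union> {0}) = card (P \<union> uminus ` P) + 1"
  proof -
    have z: "0 \<notin> P \<union> uminus ` P" unfolding P_def by auto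
    have "finite (P \<union> uminus ` P)" using fP by simp
    then show ?thesis using z by simp
  qed
  moreover have "card (P \<union> uminus ` P) = card P + card (uminus ` P)"
  proof (rule card_Un_disjoint)
    show "finite P" by (rule fP)
    show "finite (uminus ` P)" using fP by simp
    show "P \<inter> uminus ` P = {}" unfolding P_def by auto
  qed
  moreover have "card (uminus ` P) = card P" by (simp add: card_image)
  ultimately show "card (diffset A) = 2 * card {d \<in> diffset A. d > 0} + 1" unfolding P_def by simp
qed


lemma psi_inj:
  fixes a b c d a' b' c' d' :: nat
  assumes "a<b" "c<d" "a \<noteq> c" "b + c = a + d" "a'<b'" "c'<d'" "a' \<noteq> c'" "b' + c' = a' + d'"
   "min a d = min a' d'" "max a d = max a' d'" "min b c = min b' c'" "max b c = max b' c'"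
   "((a<d)\<noteq>(b<c)) = ((a'<d')\<noteq>(b'<c'))"
  shows "a = a' \<and> b = b' \<and> c = c' \<and> d = d'"
  using assms by (cases "a<d"; cases "b<c"; cases "a'<d'"; cases "b'<c'") (simp_all add: min_def max_def split: if_splits)

lemma coll_bound:
  fixes A :: "nat set"
  assumes fA: "finite A"
  defines "PS \<equiv> {(x,y). x\<in>A \<and> y\<in>A \<and> x \<le> y}"
      and "PD \<equiv> {(x,y). x\<in>A \<and> y\<in>A \<and> x < y}"
      and "APs \<equiv> {(x,y,z). x\<in>A \<and> y\<in>A \<and> z\<in>A \<and> x < y \<and> y < z \<and> x + z = 2*y}"
  shows "card {(p,q). p\<in>PD \<and> q\<in>PD \<and> p\<noteq>q \<and> (\<lambda>p. int (snd p) - int (fst p)) p = (\<lambda>p. int (snd p) - int (fst p)) q}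
          + 2 * card APs \<le> 2 * card {(p,q). p\<in>PS \<and> q\<in>PS \<and> p\<noteq>q \<and> (\<lambda>p. fst p + snd p) p = (\<lambda>p. fst p + snd p) q}"
proof -
  define DC where "DC = {(p,q). p\<in>PD \<and> q\<in>PD \<and> p\<noteq>q \<and> (\<lambda>p. int (snd p) - int (fst p)) p = (\<lambda>p. int (snd p) - int (fst p)) q}"
  define SC where "SC = {(p,q). p\<in>PS \<and> q\<in>PS \<and> p\<noteq>q \<and> (\<lambda>p. fst p + snd p) p = (\<lambda>p. fst p + snd p) q}"
  define psi :: "(nat\<times>nat)\<times>(nat\<times>nat) \<Rightarrow> ((nat\<times>nat)\<times>(nat\<times>nat))\<times>bool" where
    "psi = (\<lambda>((a,b),(c,d)). (((min a d, max a d),(min b c, max b c)), (a<d) \<noteq> (b<c)))"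
  define M1 where "M1 = (\<lambda>(x,y,z). (((x,z),(y,y)),False)) ` APs"
  define M2 where "M2 = (\<lambda>(x,y,z). (((y,y),(x,z)),True)) ` APs"
  have fS: "finite SC"
  proof -
    have "SC \<subseteq> (A \<times> A) \<times> (A \<times> A)" unfolding SC_def PS_def by auto
    then show ?thesis using fA by (meson finite_SigmaI finite_subset)
  qed
  have fAP: "finite APs"
  proof -
    have "APs \<subseteq> A \<times> A \<times> A" unfolding APs_def by auto
    then show ?thesis using fA by (meson finite_SigmaI finite_subset)
  qed
  have injM1: "inj_on (\<lambda>(x,y,z). (((x,z),(y,y)),False)) APs" unfolding inj_on_def by auto
  have injM2: "inj_on (\<lambda>(x,y,z). (((y,y),(x,z)),True)) APs" unfolding inj_on_def by auto
  have cM: "card (M1 \<union> M2) = 2 * card APs"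
  proof -
    have "M1 \<inter> M2 = {}" unfolding M1_def M2_def by auto
    moreover have "finite M1" "finite M2" unfolding M1_def M2_def using fAP by auto
    ultimately have "card (M1 \<union> M2) = card M1 + card M2" by (simp add: card_Un_disjoint)
    also have "\<dots> = 2 * card APs" unfolding M1_def M2_def using injM1 injM2 by (simp add: card_image)
    finally show ?thesis .
  qed
  have Msub: "M1 \<union> M2 \<subseteq> SC \<times> UNIV"
    unfolding M1_def M2_def SC_def APs_def PS_def by auto
  have fM: "finite (M1 \<union> M2)" unfolding M1_def M2_def using fAP by simp
  have img: "psi ` DC \<subseteq> SC \<times> UNIV - (M1 \<union> M2)"
  proof
    fix w assume "w \<in> psi ` DC"
    then obtain a b c d where w: "w = psi ((a,b),(c,d))" and dc: "((a,b),(c,d)) \<in> DC" by auto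
    have h: "a \<in> A" "b \<in> A" "c \<in> A" "d \<in> A" "a < b" "c < d" "(a,b) \<noteq> (c,d)" "b + c = a + d"
      using dc unfolding DC_def PD_def by auto
    then have ac: "a \<noteq> c" by auto
    have "w \<in> SC \<times> UNIV"
      unfolding w psi_def SC_def PS_def using h ac by (auto simp: min_def max_def)
    moreover have "w \<notin> M1"
      unfolding w psi_def M1_def using h by (auto simp: min_def max_def split: if_splits)
    moreover have "w \<notin> M2"
      unfolding w psi_def M2_def using h by (auto simp: min_def max_def split: if_splits)
    ultimately show "w \<in> SC \<times> UNIV - (M1 \<union> M2)" by blast
  qed
  have inj: "inj_on psi DC"
  proof (rule inj_onI)
    fix u v assume u: "u \<in> DC" and v: "v \<in> DC" and e: "psi u = psi v"
    obtain a b c d where uu: "u = ((a,b),(c,d))" by (metis prod.collapse)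
    obtain a' b' c' d' where vv: "v = ((a',b'),(c',d'))" by (metis prod.collapse)
    have h: "a < b" "c < d" "(a,b) \<noteq> (c,d)" "b + c = a + d"
      using u unfolding uu DC_def PD_def by auto
    have h': "a' < b'" "c' < d'" "(a',b') \<noteq> (c',d')" "b' + c' = a' + d'"
      using v unfolding vv DC_def PD_def by auto
    have "a \<noteq> c" using h by auto
    moreover have "a' \<noteq> c'" using h' by auto
    moreover have "min a d = min a' d'" "max a d = max a' d'" "min b c = min b' c'" "max b c = max b' c'"
      "((a<d)\<noteq>(b<c)) = ((a'<d')\<noteq>(b'<c'))"
      using e unfolding uu vv psi_def by auto
    ultimately have "a = a' \<and> b = b' \<and> c = c' \<and> d = d'"
      using h h' psi_inj[of a b c d a' b' c' d'] by blast
    then show "u = v" unfolding uu vv by simp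
  qed
  have "card DC = card (psi ` DC)" using inj by (simp add: card_image)
  also have "\<dots> \<le> card (SC \<times> (UNIV::bool set) - (M1 \<union> M2))"
    using img fS by (intro card_mono) auto
  also have "\<dots> = card (SC \<times> (UNIV::bool set)) - card (M1 \<union> M2)"
    using Msub fM by (intro card_Diff_subset) simp_all
  also have "\<dots> = 2 * card SC - 2 * card APs"
    using cM by (simp add: card_cartesian_product)
  finally have "card DC \<le> 2 * card SC - 2 * card APs" .
  moreover have "card (M1 \<union> M2) \<le> card (SC \<times> (UNIV::bool set))"
    using Msub fS by (intro card_mono) auto
  ultimately show ?thesis unfolding DC_def[symmetric] SC_def[symmetric]
    using cM by (simp add: card_cartesian_product)
qed



lemma r_le3:
  fixes A :: "nat set"
  assumes fA: "finite A" and cA: "card A = 6"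
  shows "card {p. p \<in> {(x,y). x\<in>A \<and> y\<in>A \<and> x \<le> y} \<and> fst p + snd p = v} \<le> 3"
proof -
  define F where "F = {p. p \<in> {(x,y). x\<in>A \<and> y\<in>A \<and> x \<le> y} \<and> fst p + snd p = v}"
  have memF: "p \<in> F \<longleftrightarrow> fst p \<in> A \<and> snd p \<in> A \<and> fst p \<le> snd p \<and> fst p + snd p = v" for p
    unfolding F_def by (cases p) simp
  have sF: "F \<subseteq> A \<times> A" using memF by (auto simp: mem_Times_iff)
  have fF: "finite F" using sF fA by (meson finite_SigmaI finite_subset)
  have i1: "inj_on fst F"
  proof (rule inj_onI)
    fix p q assume "p \<in> F" "q \<in> F" "fst p = fst q"
    then have "snd p = snd q" using memF by (metis add_left_cancel)
    then show "p = q" using \<open>fst p = fst q\<close> by (simp add: prod_eq_iff)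
  qed
  have i2: "inj_on snd F"
  proof (rule inj_onI)
    fix p q assume "p \<in> F" "q \<in> F" "snd p = snd q"
    then have "fst p = fst q" using memF by (metis add_right_cancel)
    then show "p = q" using \<open>snd p = snd q\<close> by (simp add: prod_eq_iff)
  qed
  have U: "fst ` F \<union> snd ` F \<subseteq> A" using memF by auto
  have I: "fst ` F \<inter> snd ` F \<subseteq> {v div 2}"
  proof
    fix x assume "x \<in> fst ` F \<inter> snd ` F"
    then obtain p q where pq: "p \<in> F" "q \<in> F" "x = fst p" "x = snd q" by blast
    have "fst p \<le> snd p" "fst p + snd p = v" "fst q \<le> snd q" "fst q + snd q = v"
      using pq memF by auto
    then have "2 * x = v" using pq by linarith
    then show "x \<in> {v div 2}" by auto
  qed
  have cI: "card (fst ` F \<inter> snd ` F) \<le> 1"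
    using card_mono[OF _ I] by simp
  have "card (fst ` F) + card (snd ` F) = card (fst ` F \<union> snd ` F) + card (fst ` F \<inter> snd ` F)"
    using fF by (intro card_Un_Int) auto
  moreover have "card (fst ` F \<union> snd ` F) \<le> 6" using U fA cA by (metis card_mono)
  moreover have "card (fst ` F) = card F" "card (snd ` F) = card F"
    using i1 i2 by (simp_all add: card_image)
  ultimately have "card F \<le> 3" using cI by linarith
  then show ?thesis unfolding F_def .
qed


lemma struct:
  fixes A :: "nat set"
  assumes fA: "finite A" and cA: "card A = 6"
    and ap: "(m1,m2,m3) \<in> {(x,y,z). x\<in>A \<and> y\<in>A \<and> z\<in>A \<and> x < y \<and> y < z \<and> x + z = 2*y}"
    and c3: "card {p. p \<in> {(x,y). x\<in>A \<and> y\<in>A \<and> x \<le> y} \<and> fst p + snd p = v} = 3"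
  shows "card {(x,y,z). x\<in>A \<and> y\<in>A \<and> z\<in>A \<and> x < y \<and> y < z \<and> x + z = 2*y} \<ge> 2"
proof -
  define APs where "APs = {(x,y,z). x\<in>A \<and> y\<in>A \<and> z\<in>A \<and> x < y \<and> y < z \<and> x + z = 2*y}"
  define F where "F = {p. p \<in> {(x,y). x\<in>A \<and> y\<in>A \<and> x \<le> y} \<and> fst p + snd p = v}"
  have fAP: "finite APs"
  proof -
    have "APs \<subseteq> A \<times> A \<times> A" unfolding APs_def by auto
    then show ?thesis using fA by (meson finite_SigmaI finite_subset)
  qed
  have two: "card APs \<ge> 2" if "t1 \<in> APs" "t2 \<in> APs" "t1 \<noteq> t2" for t1 t2
  proof -
    have "{t1, t2} \<subseteq> APs" using that by auto
    then have "card {t1,t2} \<le> card APs" using fAP by (intro card_mono) auto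
    then show ?thesis using that by simp
  qed
  have sF: "F \<subseteq> A \<times> A" unfolding F_def by auto
  have fF: "finite F" using sF fA by (meson finite_SigmaI finite_subset)
  have cF: "card F = 3" using c3 unfolding F_def .
  show ?thesis
  proof (cases "\<exists>c. (c,c) \<in> F")
    case True
    then obtain c where cc: "(c,c) \<in> F" by blast
    have "card (F - {(c,c)}) = 2" using cF cc fF by simp
    then obtain p q where pq: "F - {(c,c)} = {p,q}" "p \<noteq> q" by (meson card_2_iff)
    have hp: "p \<in> F" "p \<noteq> (c,c)" "q \<in> F" "q \<noteq> (c,c)" using pq by auto
    have ap_of: "(fst r, c, snd r) \<in> APs" if "r \<in> F" "r \<noteq> (c,c)" for r
    proof -
      have "fst r \<in> A" "snd r \<in> A" "fst r \<le> snd r" "fst r + snd r = v" "v = 2*c" "c \<in> A"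
        using that cc unfolding F_def by auto
      moreover have "fst r \<noteq> c"
      proof
        assume "fst r = c"
        then have "snd r = c" using calculation by simp
        then have "r = (c,c)" using \<open>fst r = c\<close> by (simp add: prod_eq_iff)
        then show False using that by simp
      qed
      ultimately show ?thesis unfolding APs_def by auto
    qed
    have "(fst p, c, snd p) \<noteq> (fst q, c, snd q)" using pq(2) by (metis prod.collapse prod.inject)
    then show ?thesis using two[OF ap_of[OF hp(1,2)] ap_of[OF hp(3,4)]] unfolding APs_def by simp
  next
    case False
    have lt: "fst p < snd p" if "p \<in> F" for p
    proof -
      have "fst p \<le> snd p" using that unfolding F_def by auto
      moreover have "fst p \<noteq> snd p"
      proof
        assume "fst p = snd p"
        then have "(fst p, fst p) \<in> F" using that by (metis prod.collapse)
        then show False using False by blast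
      qed
      ultimately show ?thesis by simp
    qed
    have disj: "fst ` F \<inter> snd ` F = {}"
    proof (rule ccontr)
      assume "fst ` F \<inter> snd ` F \<noteq> {}"
      then obtain p q where "p \<in> F" "q \<in> F" "fst p = snd q" by auto
      then show False using lt[of p] lt[of q] unfolding F_def by auto
    qed
    have i1: "inj_on fst F" unfolding F_def inj_on_def by auto
    have i2: "inj_on snd F" unfolding F_def inj_on_def by auto
    have "card (fst ` F \<union> snd ` F) = 6"
      using disj fF i1 i2 cF by (simp add: card_Un_disjoint card_image)
    moreover have "fst ` F \<union> snd ` F \<subseteq> A" using sF by auto
    ultimately have eqA: "fst ` F \<union> snd ` F = A" using fA cA by (metis card_subset_eq)
    have refl: "x \<le> v \<and> v - x \<in> A" if "x \<in> A" for x
    proof -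
      have "x \<in> fst ` F \<union> snd ` F" using that eqA by simp
      then show ?thesis
      proof
        assume "x \<in> fst ` F"
        then obtain p where "p \<in> F" "x = fst p" by auto
        then show ?thesis unfolding F_def by auto
      next
        assume "x \<in> snd ` F"
        then obtain p where "p \<in> F" "x = snd p" by auto
        then show ?thesis unfolding F_def by auto
      qed
    qed
    have m: "m1 \<in> A" "m2 \<in> A" "m3 \<in> A" "m1 < m2" "m2 < m3" "m1 + m3 = 2*m2"
      using ap by auto
    have r1: "m1 \<le> v" "v - m1 \<in> A" using refl m by auto
    have r2: "m2 \<le> v" "v - m2 \<in> A" using refl m by auto
    have r3: "m3 \<le> v" "v - m3 \<in> A" using refl m by auto
    have mir: "(v - m3, v - m2, v - m1) \<in> APs"
      unfolding APs_def using r1 r2 r3 m by auto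
    have "v \<noteq> 2 * m2"
    proof
      assume "v = 2 * m2"
      then have "(m2,m2) \<in> F" unfolding F_def using m by auto
      then show False using False by blast
    qed
    then have "(v - m3, v - m2, v - m1) \<noteq> (m1,m2,m3)" using r2 by auto
    moreover have "(m1,m2,m3) \<in> APs" using ap unfolding APs_def .
    ultimately show ?thesis using two[OF mir] unfolding APs_def by blast
  qed
qed



theorem lemma4:
  fixes A :: "nat set"
  assumes "sum_dominant A"
    and "card A = 6"
    and "\<exists>m1 m2 m3. m1 \<in> A \<and> m2 \<in> A \<and> m3 \<in> A \<and> m1 \<noteq> m2 \<and> m2 \<noteq> m3 \<and> m1 \<noteq> m3
           \<and> int m2 - int m1 = int m3 - int m2"
  shows "card {d \<in> diffset A. d > 0} \<le> 7"
proof (rule ccontr)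
  assume P8: "\<not> card {d \<in> diffset A. d > 0} \<le> 7"
  have fA: "finite A" and dom: "card (sumset A) > card (diffset A)"
    using assms(1) unfolding sum_dominant_def by auto
  note cA = assms(2)
  define PS where "PS = {(x,y). x\<in>A \<and> y\<in>A \<and> x \<le> (y::nat)}"
  define PD where "PD = {(x,y). x\<in>A \<and> y\<in>A \<and> x < (y::nat)}"
  define APs where "APs = {(x,y,z). x\<in>A \<and> y\<in>A \<and> z\<in>A \<and> x < y \<and> y < z \<and> x + z = 2*(y::nat)}"
  define f where "f = (\<lambda>p::nat\<times>nat. fst p + snd p)"
  define g where "g = (\<lambda>p::nat\<times>nat. int (snd p) - int (fst p))"
  note B = basics[OF fA cA, folded PS_def PD_def]
  define P where "P = card {d \<in> diffset A. d > 0}"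
  have cPD: "card PD = 15" and cPS: "card PS = 21" and fPD: "finite PD" and fPS: "finite PS"
    using B by auto
  have sumeq: "sumset A = f ` PS" using B(5) unfolding f_def .
  have difeq: "{d \<in> diffset A. d > 0} = g ` PD" using B(6) unfolding g_def .
  have Ns: "card (f ` PS) \<ge> 2 * P + 2" using dom B(7) sumeq unfolding P_def by simp
  define r where "r = (\<lambda>v. card {x. x \<in> PS \<and> f x = v})"
  define dd where "dd = (\<lambda>t. card {x. x \<in> PD \<and> g x = t})"
  define Ls where "Ls = (\<Sum>v\<in>f`PS. r v - 1)"
  define Ld where "Ld = (\<Sum>t\<in>g`PD. dd t - 1)"
  define Ss where "Ss = (\<Sum>v\<in>f`PS. r v * (r v - 1))"
  define Sd where "Sd = (\<Sum>t\<in>g`PD. dd t * (dd t - 1))"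
  define n3 where "n3 = card {v \<in> f`PS. r v = 3}"
  define k where "k = card APs"
  have e1: "21 = card (f ` PS) + Ls" using loss_sum[OF fPS, of f] cPS unfolding Ls_def r_def by simp
  have e2: "15 = P + Ld" using loss_sum[OF fPD, of g] cPD difeq unfolding Ld_def dd_def P_def by simp
  have cSC: "card {(u,v). u\<in>PS \<and> v\<in>PS \<and> u\<noteq>v \<and> f u = f v} = Ss"
    using coll_card[OF fPS, of f] unfolding Ss_def r_def by simp
  have cDC: "card {(u,v). u\<in>PD \<and> v\<in>PD \<and> u\<noteq>v \<and> g u = g v} = Sd"
    using coll_card[OF fPD, of g] unfolding Sd_def dd_def by simp
  have cb: "Sd + 2 * k \<le> 2 * Ss"
    using coll_bound[OF fA] unfolding cSC[symmetric] cDC[symmetric] k_def APs_def PS_def PD_def f_def g_def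
    by simp
  have i1: "2 * Ld \<le> Sd"
  proof -
    have "2 * Ld = (\<Sum>t\<in>g`PD. 2 * (dd t - 1))" unfolding Ld_def by (simp add: sum_distrib_left)
    also have "\<dots> \<le> Sd" unfolding Sd_def
    proof (rule sum_mono)
      fix t show "2 * (dd t - 1) \<le> dd t * (dd t - 1)"
        by (cases "dd t") auto
    qed
    finally show ?thesis .
  qed
  have r3: "r v \<le> 3" for v unfolding r_def PS_def f_def using r_le3[OF fA cA, of v] by simp
  have i2: "Ss \<le> 2 * Ls + 2 * n3"
  proof -
    have "Ss \<le> (\<Sum>v\<in>f`PS. 2 * (r v - 1) + (if r v = 3 then 2 else 0))"
      unfolding Ss_def
    proof (rule sum_mono)
      fix v
      have "r v \<le> 3" by (rule r3)
      then show "r v * (r v - 1) \<le> 2 * (r v - 1) + (if r v = 3 then 2 else 0)"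
        by (cases "r v"; cases "r v - 1"; auto)
    qed
    also have "\<dots> = 2 * Ls + (\<Sum>v\<in>f`PS. (if r v = 3 then 2 else 0))"
      unfolding Ls_def by (simp add: sum.distrib sum_distrib_left)
    also have "(\<Sum>v\<in>f`PS. (if r v = 3 then 2 else 0)) = (\<Sum>v\<in>{v \<in> f`PS. r v = 3}. 2::nat)"
      using sum.inter_filter[of "f`PS" "\<lambda>_. 2::nat" "\<lambda>v. r v = 3"] fPS by simp
    also have "\<dots> = 2 * n3" unfolding n3_def by simp
    finally show ?thesis .
  qed
  have i3: "2 * n3 \<le> Ls"
  proof -
    have "2 * n3 = (\<Sum>v\<in>{v \<in> f`PS. r v = 3}. 2::nat)" unfolding n3_def by simp
    also have "\<dots> = (\<Sum>v\<in>f`PS. (if r v = 3 then 2 else 0))"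
      using sum.inter_filter[of "f`PS" "\<lambda>_. 2::nat" "\<lambda>v. r v = 3"] fPS by simp
    also have "\<dots> \<le> Ls" unfolding Ls_def by (rule sum_mono) auto
    finally show ?thesis .
  qed
  obtain m1 m2 m3 where m: "m1 \<in> A" "m2 \<in> A" "m3 \<in> A" "m1 \<noteq> m2" "m2 \<noteq> m3" "m1 \<noteq> m3"
           "int m2 - int m1 = int m3 - int m2" using assms(3) by blast
  obtain t where t: "t \<in> APs"
  proof (cases "m1 < m2")
    case True
    then have "(m1,m2,m3) \<in> APs" unfolding APs_def using m by auto
    then show ?thesis using that by blast
  next
    case False
    then have "(m3,m2,m1) \<in> APs" unfolding APs_def using m by auto
    then show ?thesis using that by blast
  qed
  have fAP: "finite APs"
  proof -
    have "APs \<subseteq> A \<times> A \<times> A" unfolding APs_def by auto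
    then show ?thesis using fA by (meson finite_SigmaI finite_subset)
  qed
  have "card APs > 0" using t fAP card_gt_0_iff by blast
  then have k1: "k \<ge> 1" unfolding k_def by simp
  have "P \<ge> 8" using P8 unfolding P_def by simp
  then have a1: "2 * Ld \<ge> 11 + Ls" "Ld \<le> 7" using e1 e2 Ns by linarith+
  then have a2: "5 * Ls \<ge> 13" "Ls \<le> 3" using i1 i2 i3 cb k1 by linarith+
  then have "Ls = 3" by linarith
  have n31: "n3 \<le> 1"
  proof (rule ccontr)
    assume "\<not> n3 \<le> 1"
    then have "n3 \<ge> 2" by simp
    then show False using i3 \<open>Ls = 3\<close> by linarith
  qed
  have n32: "n3 \<ge> 1"
  proof (rule ccontr)
    assume "\<not> n3 \<ge> 1"
    then have "n3 = 0" by simp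
    then show False using a1 i1 i2 cb k1 \<open>Ls = 3\<close> by linarith
  qed
  have ar: "n3 \<ge> 1 \<and> k \<le> 1" using n31 n32 a1 i1 i2 cb k1 \<open>Ls = 3\<close> by linarith
  then have "n3 \<noteq> 0" by simp
  then have "{v \<in> f`PS. r v = 3} \<noteq> {}" unfolding n3_def by (metis card.empty)
  then obtain v where "r v = 3" by blast
  then have "card {p. p \<in> {(x,y). x\<in>A \<and> y\<in>A \<and> x \<le> y} \<and> fst p + snd p = v} = 3"
    unfolding r_def PS_def f_def by simp
  moreover obtain x y z where "t = (x,y,z)" by (metis prod.collapse)
  ultimately have "k \<ge> 2" using struct[OF fA cA, of x y z v] t unfolding k_def APs_def by simp
  then show False using ar by simp
qed

end
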